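(* In the setting described in the context, Algorithm 1 run on $(\psi,\mathcal{A})$, where $\psi$ is the weighted MaxSAT instance produced by Reduction 4, terminates and returns an array $\mathrm{Ans}$ such that for every $\vec a_l\in\mathcal{A}$, $\vec a_l\in\mathrm{Cons}(Q,I,\Sigma)$ if and only if $\mathrm{Ans}[l]$ is true.
   Context: An $\mathcal{R}$-instance $I$ is a finite set of facts. A (subset) repair of $I$ w.r.t. a set $\Sigma$ of constraints is a $J\subseteq I$ with $J\models\Sigma$ maximal under inclusion among subsets of $I$ satisfying $\Sigma$; $\mathrm{Cons}(Q,I,\Sigma)=\bigcap\{Q(J):J\text{ a repair of }I\}$. Potential answers: $\mathcal{A}=Q(I)$, enumerated as $\vec a_1,\vec a_2,\dots$. Setting: either (a) $\Sigma$ is a set of primary key constraints (one per relation) on a schema $\mathcal{R}$, $Q$ is a fixed non-boolean conjunctive query, and $\phi$ is the CNF-formula of Reduction 2; or (b) $\Sigma$ is a fixed finite set of denial constraints, $Q$ is a fixed union of non-boolean conjunctive queries, and $\phi$ is the CNF form of the formula $\phi'$ of Reduction 3. In both cases $\phi$ contains a variable $p_l$ for each $\vec a_l\in\mathcal{A}$, each $p_l$ occurs in $\phi$ only as the negative literal $\neg p_l$, and $\phi$ has the property that there is a satisfying assignment of $\phi$ with $p_l=1$ iff $\vec a_l\notin\mathrm{Cons}(Q,I,\Sigma)$. (Reduction 2: variables $x_i$ per fact $f_i$; clauses $\bigvee_{f_i\in G}x_i$ for each key-equal group $G$, i.e. maximal set of facts of one relation agreeing on the key attributes; clauses $\big(\bigvee_{f_i\in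 W}\neg x_i\big)\vee\neg p_l$ for each minimal witness $W$ to $Q[\vec a_l]$, i.e. inclusion-minimal $W\subseteq I$ satisfying the boolean query obtained by substituting $\vec a_l$ for the free variables. Reduction 3: additionally uses clauses $\bigvee_{f_i\in V}\neg x_i$ for each inclusion-minimal $V\subseteq I$ violating $\Sigma$, and for each fact $f_i$ the clause $x_i\vee\bigvee_j y^i_j$ together with $y^i_j\leftrightarrow\bigwedge_{f_d\in N^i_j}x_d$, where the $N^i_j$ are the near-violations w.r.t. $f_i$: sets $S\models\Sigma$ with $S\cup\{f_i\}$ a minimal violation, or $\{f_{true}\}$ with $x_{true}=\mathrm{true}$ if $\{f_i\}$ is itself a minimal violation; in place of key-equal group clauses.) Weighted MaxSAT: hard and weighted soft clauses; an optimal solution satisfies all hard clauses and maximizes total weight of satisfied soft clauses. Reduction 4: make all clauses of $\phi$ hard, and add for each $\vec a_l\in\mathcal{A}$ a soft unit clause $(p_l)$, all of equal weight; the result is $\psi$. Algorithm 1 on input $(\psi,\mathcal{A})$: set $\mathrm{Ans}[l]=\mathrm{true}$ for all $l$ and $moreAnswers=\mathrm{true}$. While $moreAnswers$: set $moreAnswers=\mathrm{false}$; let $opt$ be an optimal solution of the current $\psi$; for each $l$ with $opt(p_l)=1$: set $moreAnswers=\mathrm{true}$, $\mathrm{Ans}[l]=\mathrm{false}$, remove the unit clause $(p_l)$ from $\psi$, remove all clauses containing the literal $\neg p_l$ from $\psi$, and add the hard unit clause $(\neg p_l)$ to $\psi$. Finally return $\mathrm{Ans}$. *)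

theory Defs
  imports Main
begin

text \<open>The constraint set Sigma is
 represented by its satisfaction predicate on instances (sat J iff J models Sigma), the query Q by
 its answer function on instances.\<close>

definition is_repair :: "('f set \<Rightarrow> bool) \<Rightarrow> 'f set \<Rightarrow> 'f set \<Rightarrow> bool" where
  "is_repair sat I J \<longleftrightarrow> J \<subseteq> I \<and> sat J \<and> (\<forall>J'. J \<subset> J' \<and> J' \<subseteq> I \<longrightarrow> \<not> sat J')"

definition Cons :: "('f set \<Rightarrow> 'a set) \<Rightarrow> 'f set \<Rightarrow> ('f set \<Rightarrow> bool) \<Rightarrow> 'a set" where
  "Cons Q I sat = \<Inter> {Q J | J. is_repair sat I J}"

type_synonym 'v lit = "'v \<times> bool"   \<comment> \<open>(variable, polarity); (v,False) is the literal not v\<close>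
type_synonym 'v clause = "'v lit set"

definition sat_clause :: "('v \<Rightarrow> bool) \<Rightarrow> 'v clause \<Rightarrow> bool" where
  "sat_clause \<sigma> C \<longleftrightarrow> (\<exists>(v, b) \<in> C. \<sigma> v = b)"

definition sat_cnf :: "('v \<Rightarrow> bool) \<Rightarrow> 'v clause set \<Rightarrow> bool" where
  "sat_cnf \<sigma> F \<longleftrightarrow> (\<forall>C \<in> F. sat_clause \<sigma> C)"

definition soft_value :: "('v clause \<times> nat) set \<Rightarrow> ('v \<Rightarrow> bool) \<Rightarrow> nat" where
  "soft_value S \<sigma> = (\<Sum>(C, w) \<in> {(C, w) \<in> S. sat_clause \<sigma> C}. w)"

definition optimal :: "'v clause set \<Rightarrow> ('v clause \<times> nat) set \<Rightarrow> ('v \<Rightarrow> bool) \<Rightarrow> bool" where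
  "optimal H S \<sigma> \<longleftrightarrow> sat_cnf \<sigma> H \<and>
     (\<forall>\<sigma>'. sat_cnf \<sigma>' H \<longrightarrow> soft_value S \<sigma>' \<le> soft_value S \<sigma>)"

text \<open>p l is the variable p_l of the potential answer with index l < n (0-based);
 all soft unit clauses get the same weight w.\<close>

definition reduction4 :: "'v clause set \<Rightarrow> (nat \<Rightarrow> 'v) \<Rightarrow> nat \<Rightarrow> nat
    \<Rightarrow> 'v clause set \<times> ('v clause \<times> nat) set" where
  "reduction4 \<phi> p n w = (\<phi>, {({(p l, True)}, w) | l. l < n})"

text \<open>One iteration of the while loop with chosen optimal
 solution opt handles all l with opt(p_l) = 1 (set L); the for loop over L is performed as one batch
 update (its result does not depend on the order).\<close>

type_synonym 'v alg_state = "'v clause set \<times> ('v clause \<times> nat) set \<times> (nat \<Rightarrow> bool)"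

definition sel :: "(nat \<Rightarrow> 'v) \<Rightarrow> nat \<Rightarrow> ('v \<Rightarrow> bool) \<Rightarrow> nat set" where
  "sel p n opt = {l. l < n \<and> opt (p l)}"

definition alg_update :: "(nat \<Rightarrow> 'v) \<Rightarrow> nat set \<Rightarrow> 'v alg_state \<Rightarrow> 'v alg_state" where
  "alg_update p L s = (case s of (H, S, Ans) \<Rightarrow>
     ({C \<in> H. \<forall>l \<in> L. (p l, False) \<notin> C} \<union> {{(p l, False)} | l. l \<in> L},
      {(C, c) \<in> S. \<forall>l \<in> L. C \<noteq> {(p l, True)}},
      (\<lambda>k. if k \<in> L then False else Ans k)))"

text \<open>An iteration that sets moreAnswers = true (some opt(p_l) = 1).\<close>
definition alg_step :: "(nat \<Rightarrow> 'v) \<Rightarrow> nat \<Rightarrow> 'v alg_state \<Rightarrow> 'v alg_state \<Rightarrow> bool" where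
  "alg_step p n s s' \<longleftrightarrow> (case s of (H, S, Ans) \<Rightarrow>
     (\<exists>opt. optimal H S opt \<and> sel p n opt \<noteq> {} \<and> s' = alg_update p (sel p n opt) s))"

inductive alg_result :: "(nat \<Rightarrow> 'v) \<Rightarrow> nat \<Rightarrow> 'v alg_state \<Rightarrow> (nat \<Rightarrow> bool) \<Rightarrow> bool"
  for p n where
  stop: "optimal H S opt \<Longrightarrow> sel p n opt = {} \<Longrightarrow> alg_result p n (H, S, Ans) Ans"
| continue: "alg_step p n s s' \<Longrightarrow> alg_result p n s' R \<Longrightarrow> alg_result p n s R"

definition alg_init :: "'v clause set \<times> ('v clause \<times> nat) set \<Rightarrow> 'v alg_state" where
  "alg_init \<psi> = (fst \<psi>, snd \<psi>, (\<lambda>_. True))"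

end

theory Submission
  imports Defs
begin

definition Hs :: "'v clause set \<Rightarrow> (nat \<Rightarrow> 'v) \<Rightarrow> nat set \<Rightarrow> 'v clause set" where
  "Hs \<phi> p D = {C \<in> \<phi>. \<forall>l \<in> D. (p l, False) \<notin> C} \<union> {{(p l, False)} | l. l \<in> D}"

definition Ss :: "(nat \<Rightarrow> 'v) \<Rightarrow> nat \<Rightarrow> nat \<Rightarrow> nat set \<Rightarrow> ('v clause \<times> nat) set" where
  "Ss p n w D = {({(p l, True)}, w) | l. l < n \<and> l \<notin> D}"

definition st :: "'v clause set \<Rightarrow> (nat \<Rightarrow> 'v) \<Rightarrow> nat \<Rightarrow> nat \<Rightarrow> nat set \<Rightarrow> 'v alg_state" where
  "st \<phi> p n w D = (Hs \<phi> p D, Ss p n w D, (\<lambda>k. k \<notin> D))"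

lemma sat_H: "sat_cnf \<sigma> (Hs \<phi> p D) \<longleftrightarrow> sat_cnf \<sigma> \<phi> \<and> (\<forall>l\<in>D. \<not> \<sigma> (p l))"
proof
  assume a: "sat_cnf \<sigma> (Hs \<phi> p D)"
  have u: "\<forall>l\<in>D. \<not> \<sigma> (p l)"
  proof
    fix l assume "l \<in> D"
    then have "{(p l, False)} \<in> Hs \<phi> p D" unfolding Hs_def by blast
    then have "sat_clause \<sigma> {(p l, False)}" using a unfolding sat_cnf_def by blast
    then show "\<not> \<sigma> (p l)" unfolding sat_clause_def by simp
  qed
  have "sat_cnf \<sigma> \<phi>" unfolding sat_cnf_def
  proof
    fix C assume C: "C \<in> \<phi>"
    show "sat_clause \<sigma> C"
    proof (cases "\<exists>l\<in>D. (p l, False) \<in> C")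
      case True
      then obtain l where "l \<in> D" "(p l, False) \<in> C" by blast
      then have "\<sigma> (p l) = False" using u by blast
      then show ?thesis using \<open>(p l, False) \<in> C\<close> unfolding sat_clause_def by blast
    next
      case False
      then have "C \<in> Hs \<phi> p D" using C unfolding Hs_def by blast
      then show ?thesis using a unfolding sat_cnf_def by blast
    qed
  qed
  then show "sat_cnf \<sigma> \<phi> \<and> (\<forall>l\<in>D. \<not> \<sigma> (p l))" using u by blast
next
  assume "sat_cnf \<sigma> \<phi> \<and> (\<forall>l\<in>D. \<not> \<sigma> (p l))"
  then show "sat_cnf \<sigma> (Hs \<phi> p D)" unfolding sat_cnf_def sat_clause_def Hs_def by fastforce
qed

lemma mod_sat:
  assumes "sat_cnf \<sigma> \<phi>" "\<forall>l < n. \<forall>C \<in> \<phi>. (p l, True) \<notin> C" "K \<subseteq> {..<n}"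
  shows "sat_cnf (\<lambda>v. if v \<in> p ` K then False else \<sigma> v) \<phi>"
  unfolding sat_cnf_def
proof
  fix C assume C: "C \<in> \<phi>"
  then obtain v b where vb: "(v, b) \<in> C" "\<sigma> v = b" using assms(1) unfolding sat_cnf_def sat_clause_def by blast
  show "sat_clause (\<lambda>v. if v \<in> p ` K then False else \<sigma> v) C"
  proof (cases "v \<in> p ` K")
    case True
    then obtain k where k: "k \<in> K" "v = p k" by blast
    have "k < n" using k(1) assms(3) by blast
    then have "(p k, True) \<notin> C" using assms(2) C by blast
    then have "b = False" using vb(1) k(2) by (cases b) auto
    then have "(\<lambda>v. if v \<in> p ` K then False else \<sigma> v) v = b" using True by simp
    then show ?thesis using vb(1) unfolding sat_clause_def by blast
  next
    case False
    then have "(\<lambda>v. if v \<in> p ` K then False else \<sigma> v) v = b" using vb(2) by simp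
    then show ?thesis using vb(1) unfolding sat_clause_def by blast
  qed
qed

lemma soft_le: "finite S \<Longrightarrow> soft_value S \<sigma> \<le> (\<Sum>(C, w) \<in> S. w)"
  unfolding soft_value_def by (rule sum_mono2) auto

lemma opt_exists:
  assumes "\<exists>\<sigma>. sat_cnf \<sigma> H" "finite S"
  shows "\<exists>opt. optimal H S opt"
proof -
  define V where "V = {soft_value S \<sigma> | \<sigma>. sat_cnf \<sigma> H}"
  have fin: "finite V" unfolding V_def
    using soft_le[OF assms(2)] by (intro finite_nat_set_iff_bounded_le[THEN iffD2]) blast
  have ne: "V \<noteq> {}" using assms(1) unfolding V_def by blast
  have "Max V \<in> V" using fin ne by simp
  then obtain opt where o: "sat_cnf opt H" "soft_value S opt = Max V" unfolding V_def by auto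
  have "\<forall>\<sigma>'. sat_cnf \<sigma>' H \<longrightarrow> soft_value S \<sigma>' \<le> soft_value S opt"
  proof (intro allI impI)
    fix \<sigma>' assume "sat_cnf \<sigma>' H"
    then have "soft_value S \<sigma>' \<in> V" unfolding V_def by blast
    then show "soft_value S \<sigma>' \<le> soft_value S opt" using o(2) fin by simp
  qed
  then show ?thesis using o unfolding optimal_def by blast
qed

context
  fixes \<phi> :: "'v clause set" and p :: "nat \<Rightarrow> 'v" and n w :: nat
  assumes inj: "inj_on p {..<n}"
    and pos: "\<forall>l < n. \<forall>C \<in> \<phi>. (p l, True) \<notin> C"
    and satphi: "\<exists>\<sigma>. sat_cnf \<sigma> \<phi>"
    and wpos: "w > 0"
begin

definition ginv :: "nat set \<Rightarrow> bool" where
  "ginv D \<longleftrightarrow> D \<subseteq> {..<n} \<and> (\<forall>l\<in>D. \<exists>\<sigma>. sat_cnf \<sigma> \<phi> \<and> \<sigma> (p l))"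

lemma ginv_empty: "ginv {}" unfolding ginv_def by simp

lemma update:
  assumes "D \<subseteq> {..<n}" "L \<subseteq> {..<n}" "L \<inter> D = {}"
  shows "alg_update p L (st \<phi> p n w D) = st \<phi> p n w (D \<union> L)"
proof -
  have eqp: "\<And>a b. a \<in> {..<n} \<Longrightarrow> b \<in> {..<n} \<Longrightarrow> p a = p b \<longleftrightarrow> a = b"
    using inj unfolding inj_on_def by blast
  have H: "{C \<in> Hs \<phi> p D. \<forall>l \<in> L. (p l, False) \<notin> C} \<union> {{(p l, False)} | l. l \<in> L} = Hs \<phi> p (D \<union> L)"
  proof (rule set_eqI)
    fix C
    have u: "\<forall>l\<in>L. (p l, False) \<notin> {(p k, False)}" if "k \<in> D" for k
      using that assms eqp by (metis disjoint_iff prod.inject singletonD subsetD)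
    show "C \<in> {C \<in> Hs \<phi> p D. \<forall>l \<in> L. (p l, False) \<notin> C} \<union> {{(p l, False)} | l. l \<in> L} \<longleftrightarrow> C \<in> Hs \<phi> p (D \<union> L)"
      unfolding Hs_def using u by blast
  qed
  have S: "{(C, c) \<in> Ss p n w D. \<forall>l \<in> L. C \<noteq> {(p l, True)}} = Ss p n w (D \<union> L)"
  proof (rule set_eqI)
    fix x
    have u: "({(p k, True)} \<noteq> {(p l, True)}) \<longleftrightarrow> k \<noteq> l" if "k < n" "l \<in> L" for k l
      using that assms eqp by auto
    show "x \<in> {(C, c) \<in> Ss p n w D. \<forall>l \<in> L. C \<noteq> {(p l, True)}} \<longleftrightarrow> x \<in> Ss p n w (D \<union> L)"
      unfolding Ss_def using u by auto
  qed
  show ?thesis unfolding alg_update_def st_def using H S by auto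
qed

lemma sat_Hs: "D \<subseteq> {..<n} \<Longrightarrow> \<exists>\<sigma>. sat_cnf \<sigma> (Hs \<phi> p D)"
proof -
  assume D: "D \<subseteq> {..<n}"
  obtain \<sigma> where s: "sat_cnf \<sigma> \<phi>" using satphi by blast
  have "sat_cnf (\<lambda>v. if v \<in> p ` D then False else \<sigma> v) \<phi>" using mod_sat[OF s pos D] .
  then show ?thesis unfolding sat_H by auto
qed

lemma fin_Ss: "finite (Ss p n w D)"
proof -
  have "Ss p n w D \<subseteq> (\<lambda>l. ({(p l, True)}, w)) ` {..<n}" unfolding Ss_def by auto
  then show ?thesis by (rule finite_subset) simp
qed

lemma opt_st: "D \<subseteq> {..<n} \<Longrightarrow> \<exists>opt. optimal (Hs \<phi> p D) (Ss p n w D) opt"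
  using opt_exists[OF sat_Hs fin_Ss] by blast

lemma ginv_opt: "ginv D \<Longrightarrow> s = st \<phi> p n w D \<Longrightarrow> \<exists>opt. optimal (fst s) (fst (snd s)) opt"
  using opt_st unfolding ginv_def st_def by auto

lemma step_lem:
  assumes "ginv D" "alg_step p n (st \<phi> p n w D) s'"
  shows "\<exists>D'. ginv D' \<and> s' = st \<phi> p n w D' \<and> card D < card D'"
proof -
  from assms(2) obtain opt where o: "optimal (Hs \<phi> p D) (Ss p n w D) opt"
    "sel p n opt \<noteq> {}" "s' = alg_update p (sel p n opt) (st \<phi> p n w D)"
    unfolding alg_step_def st_def by auto
  let ?L = "sel p n opt"
  have D: "D \<subseteq> {..<n}" using assms(1) unfolding ginv_def by blast
  have so: "sat_cnf opt \<phi>" "\<forall>l\<in>D. \<not> opt (p l)" using o(1) unfolding optimal_def sat_H by auto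
  have L: "?L \<subseteq> {..<n}" "?L \<inter> D = {}" using so unfolding sel_def by auto
  have e: "s' = st \<phi> p n w (D \<union> ?L)" using o(3) update[OF D L] by simp
  have i: "ginv (D \<union> ?L)" using assms(1) L so unfolding ginv_def sel_def by auto
  have "card D < card (D \<union> ?L)"
  proof (rule psubset_card_mono)
    show "finite (D \<union> ?L)" using D L by (meson finite_Un finite_lessThan finite_subset)
    show "D \<subset> D \<union> ?L" using L o(2) by blast
  qed
  then show ?thesis using e i by blast
qed

lemma reach: "(alg_step p n)\<^sup>*\<^sup>* (st \<phi> p n w {}) s \<Longrightarrow> \<exists>D. ginv D \<and> s = st \<phi> p n w D"
proof (induction rule: rtranclp_induct)
  case base
  then show ?case unfolding ginv_def by blast
next
  case (step y z)
  then obtain D where "ginv D" "y = st \<phi> p n w D" by blast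
  then show ?case using step.hyps(2) using step_lem by blast
qed

lemma no_inf: "\<not> (\<exists>f. f 0 = st \<phi> p n w {} \<and> (\<forall>i. alg_step p n (f i) (f (Suc i))))"
proof
  assume "\<exists>f. f 0 = st \<phi> p n w {} \<and> (\<forall>i. alg_step p n (f i) (f (Suc i)))"
  then obtain f where f: "f 0 = st \<phi> p n w {}" "\<forall>i. alg_step p n (f i) (f (Suc i))" by blast
  have "\<exists>D. ginv D \<and> f i = st \<phi> p n w D \<and> i \<le> card D" for i
  proof (induction i)
    case 0
    then show ?case using f(1) unfolding ginv_def by auto
  next
    case (Suc i)
    then obtain D where D: "ginv D" "f i = st \<phi> p n w D" "i \<le> card D" by blast
    then obtain D' where "ginv D'" "f (Suc i) = st \<phi> p n w D'" "card D < card D'"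
      using step_lem[OF D(1)] f(2) by metis
    then show ?case using D(3) by auto
  qed
  then obtain D where D: "ginv D" "Suc n \<le> card D" by blast
  have "card D \<le> n" using D(1) unfolding ginv_def by (metis card_lessThan card_mono finite_lessThan)
  then show False using D(2) by simp
qed

lemma exists_result: "ginv D \<Longrightarrow> \<exists>R. alg_result p n (st \<phi> p n w D) R"
proof (induction "n - card D" arbitrary: D rule: less_induct)
  case less
  have D: "D \<subseteq> {..<n}" using less.prems unfolding ginv_def by blast
  obtain opt where o: "optimal (Hs \<phi> p D) (Ss p n w D) opt" using opt_st[OF D] by blast
  show ?case
  proof (cases "sel p n opt = {}")
    case True
    then show ?thesis unfolding st_def using alg_result.stop[OF o True] by blast
  next
    case False
    let ?s' = "alg_update p (sel p n opt) (st \<phi> p n w D)"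
    have st: "alg_step p n (st \<phi> p n w D) ?s'" unfolding alg_step_def st_def
      using o False by (auto simp: st_def)
    obtain D' where D': "ginv D'" "?s' = st \<phi> p n w D'" "card D < card D'"
      using step_lem[OF less.prems st] by blast
    have "card D' \<le> n" using D'(1) unfolding ginv_def by (metis card_lessThan card_mono finite_lessThan)
    then have "n - card D' < n - card D" using D'(3) by simp
    then obtain R where "alg_result p n (st \<phi> p n w D') R" using less.hyps D'(1) by blast
    then show ?thesis using alg_result.continue[OF st] D'(2) by metis
  qed
qed

lemma correct:
  assumes "alg_result p n s R"
  shows "\<exists>D. ginv D \<and> s = st \<phi> p n w D \<Longrightarrow> \<forall>l<n. R l \<longleftrightarrow> \<not> (\<exists>\<sigma>. sat_cnf \<sigma> \<phi> \<and> \<sigma> (p l))"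
  using assms
proof (induction rule: alg_result.induct)
  case (stop H S opt Ans)
  then obtain D where D: "ginv D" "(H, S, Ans) = st \<phi> p n w D" by blast
  have HS: "H = Hs \<phi> p D" "S = Ss p n w D" "Ans = (\<lambda>k. k \<notin> D)" using D(2) unfolding st_def by auto
  have Dn: "D \<subseteq> {..<n}" using D(1) unfolding ginv_def by blast
  show ?case
  proof (intro allI impI)
    fix l assume l: "l < n"
    show "Ans l \<longleftrightarrow> \<not> (\<exists>\<sigma>. sat_cnf \<sigma> \<phi> \<and> \<sigma> (p l))"
    proof (cases "l \<in> D")
      case True
      then show ?thesis using D(1) HS(3) unfolding ginv_def by auto
    next
      case False
      have "\<not> (\<exists>\<sigma>. sat_cnf \<sigma> \<phi> \<and> \<sigma> (p l))"
      proof
        assume "\<exists>\<sigma>. sat_cnf \<sigma> \<phi> \<and> \<sigma> (p l)"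
        then obtain \<sigma> where s: "sat_cnf \<sigma> \<phi>" "\<sigma> (p l)" by blast
        define \<tau> where "\<tau> = (\<lambda>v. if v \<in> p ` D then False else \<sigma> v)"
        have t1: "sat_cnf \<tau> \<phi>" unfolding \<tau>_def using mod_sat[OF s(1) pos Dn] .
        have t2: "\<forall>k\<in>D. \<not> \<tau> (p k)" unfolding \<tau>_def by auto
        have pl: "p l \<notin> p ` D" using inj False l Dn unfolding inj_on_def by blast
        have tl: "\<tau> (p l)" unfolding \<tau>_def using pl s(2) by simp
        have tH: "sat_cnf \<tau> H" unfolding HS sat_H using t1 t2 by blast
        have "soft_value S \<tau> \<le> soft_value S opt" using stop.hyps(1) tH unfolding optimal_def by blast
        moreover have "soft_value S opt = 0"
        proof -
          have e: "{(C, w) \<in> S. sat_clause opt C} = {}"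
            using stop.hyps(2) unfolding HS Ss_def sel_def sat_clause_def by auto
          show ?thesis unfolding soft_value_def e by simp
        qed
        moreover have "w \<le> soft_value S \<tau>"
        proof -
          have m: "({(p l, True)}, w) \<in> {(C, w) \<in> S. sat_clause \<tau> C}"
            unfolding HS Ss_def sat_clause_def using l False tl by auto
          have fin: "finite {(C, w) \<in> S. sat_clause \<tau> C}"
            using fin_Ss[of D] unfolding HS by (rule finite_subset[rotated]) auto
          have "(\<lambda>(C, w). w) ({(p l, True)}, w) \<le> (\<Sum>(C, w) \<in> {(C, w) \<in> S. sat_clause \<tau> C}. w)"
            by (rule member_le_sum[OF m _ fin]) auto
          then show ?thesis unfolding soft_value_def by simp
        qed
        ultimately show False using wpos by simp
      qed
      then show ?thesis using HS(3) False by simp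
    qed
  qed
next
  case (continue s s' R)
  then obtain D where D: "ginv D" "s = st \<phi> p n w D" by blast
  then obtain D' where "ginv D'" "s' = st \<phi> p n w D'" using step_lem continue.hyps(1) by blast
  then show ?case using continue.IH by blast
qed

end

theorem proposition4:
  fixes I :: "'f set" and sat :: "'f set \<Rightarrow> bool" and Q :: "'f set \<Rightarrow> 'a set"
    and as :: "'a list" and \<phi> :: "'v clause set" and p :: "nat \<Rightarrow> 'v" and w :: nat
  assumes "finite I"
    and "distinct as" and "set as = Q I"
    and "finite \<phi>" and "\<forall>C \<in> \<phi>. finite C"
    and "inj_on p {..<length as}"
    and "\<forall>l < length as. \<forall>C \<in> \<phi>. (p l, True) \<notin> C"
    and "\<exists>\<sigma>. sat_cnf \<sigma> \<phi>"
    and "\<forall>l < length as. (\<exists>\<sigma>. sat_cnf \<sigma> \<phi> \<and> \<sigma> (p l)) \<longleftrightarrow> as ! l \<notin> Cons Q I sat"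
    and "w > 0"
  shows "(\<nexists>f. f 0 = alg_init (reduction4 \<phi> p (length as) w) \<and>
              (\<forall>i. alg_step p (length as) (f i) (f (Suc i))))
       \<and> (\<forall>s. (alg_step p (length as))\<^sup>*\<^sup>* (alg_init (reduction4 \<phi> p (length as) w)) s \<longrightarrow>
              (\<exists>opt. optimal (fst s) (fst (snd s)) opt))
       \<and> (\<exists>R. alg_result p (length as) (alg_init (reduction4 \<phi> p (length as) w)) R)
       \<and> (\<forall>R. alg_result p (length as) (alg_init (reduction4 \<phi> p (length as) w)) R \<longrightarrow>
              (\<forall>l < length as. as ! l \<in> Cons Q I sat \<longleftrightarrow> R l))"
proof -
  let ?n = "length as"
  have init: "alg_init (reduction4 \<phi> p ?n w) = st \<phi> p ?n w {}"
    unfolding alg_init_def reduction4_def st_def Hs_def Ss_def by auto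
  have i0: "ginv \<phi> p ?n {}" using ginv_empty[OF assms(6,7,8,10)] .
  note A = assms(6,7,8,10)
  have c1: "\<nexists>f. f 0 = alg_init (reduction4 \<phi> p ?n w) \<and> (\<forall>i. alg_step p ?n (f i) (f (Suc i)))"
    using no_inf[OF A] init by simp
  have c2: "\<forall>s. (alg_step p ?n)\<^sup>*\<^sup>* (alg_init (reduction4 \<phi> p ?n w)) s \<longrightarrow>
              (\<exists>opt. optimal (fst s) (fst (snd s)) opt)"
  proof (intro allI impI)
    fix s assume "(alg_step p ?n)\<^sup>*\<^sup>* (alg_init (reduction4 \<phi> p ?n w)) s"
    then have "(alg_step p ?n)\<^sup>*\<^sup>* (st \<phi> p ?n w {}) s" using init by simp
    then obtain D where "ginv \<phi> p ?n D" "s = st \<phi> p ?n w D" using reach[OF A] by blast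
    then show "\<exists>opt. optimal (fst s) (fst (snd s)) opt"
      using ginv_opt[OF A] by blast
  qed
  have c3: "\<exists>R. alg_result p ?n (alg_init (reduction4 \<phi> p ?n w)) R"
    using exists_result[OF A i0] init by simp
  have c4: "\<forall>R. alg_result p ?n (alg_init (reduction4 \<phi> p ?n w)) R \<longrightarrow>
              (\<forall>l < ?n. as ! l \<in> Cons Q I sat \<longleftrightarrow> R l)"
  proof (intro allI impI)
    fix R l assume r: "alg_result p ?n (alg_init (reduction4 \<phi> p ?n w)) R" and l: "l < ?n"
    have "\<forall>l<?n. R l \<longleftrightarrow> \<not> (\<exists>\<sigma>. sat_cnf \<sigma> \<phi> \<and> \<sigma> (p l))"
    proof -
      have r': "alg_result p ?n (st \<phi> p ?n w {}) R" using r init by simp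
      have "\<exists>D. ginv \<phi> p ?n D \<and> st \<phi> p ?n w {} = st \<phi> p ?n w D" using i0 by blast
      then show ?thesis using correct[OF A r'] by blast
    qed
    then show "as ! l \<in> Cons Q I sat \<longleftrightarrow> R l" using assms(9) l by auto
  qed
  show ?thesis using c1 c2 c3 c4 by blast
qed

end
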